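(* $w(\mathsf{T_f}(2))\ge\omega+1$.
   Context: $2$ denotes the two-element chain $0<1$. Trees: for a non-empty quasi-order $Q$, $\mathsf{T_f}(Q)$ is the smallest class containing the leaf $\cdot q$ for each $q\in Q$, and containing $\cdot(\tau_0,\dots,\tau_{k-1})$ (an unlabelled root whose children are the $\tau_i$) for every finite set $\{\tau_0,\dots,\tau_{k-1}\}\subseteq\mathsf{T_f}(Q)$ with $k\ge1$. Its order $\le_T$ is defined recursively: - $\cdot x\le_T\cdot y$ iff $x\le_Q y$; - $\cdot x\le_T\cdot(\tau_j)_{j<l}$ iff $\cdot x\le_T\tau_j$ for some $j$; - $\cdot(\sigma_i)_{i<k}\le_T\cdot(\tau_j)_{j<l}$ iff every $\sigma_i$ is $\le_T$ some $\tau_j$; - a non-leaf tree is never $\le_T$ a leaf. Width: for a well-quasi-order $P$, $w(P)=\sup_{x\in P}(w(L_\bot(x))+1)$, where $L_\bot(x)=\{y\in P: x\not\le y\text{ and }y\not\le x\}$ carries the induced order. This is a well-founded recursion. *)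

theory Defs
  imports Main "HOL-Library.FSet" "HOL-Library.Product_Lexorder"
begin

datatype 'q tree = Leaf 'q | Node "'q tree fset"

inductive tf :: "'q tree \<Rightarrow> bool" where
  tf_leaf: "tf (Leaf q)"
| tf_node: "ts \<noteq> {||} \<Longrightarrow> (\<forall>t. t |\<in>| ts \<longrightarrow> tf t) \<Longrightarrow> tf (Node ts)"

definition Tf :: "'q tree set" where
  "Tf = {t. tf t}"

inductive tree_le :: "('q \<Rightarrow> 'q \<Rightarrow> bool) \<Rightarrow> 'q tree \<Rightarrow> 'q tree \<Rightarrow> bool"
  for le :: "'q \<Rightarrow> 'q \<Rightarrow> bool" where
  leaf_leaf: "le x y \<Longrightarrow> tree_le le (Leaf x) (Leaf y)"
| leaf_node: "t |\<in>| ts \<Longrightarrow> tree_le le (Leaf x) t \<Longrightarrow> tree_le le (Leaf x) (Node ts)"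
| node_node: "(\<forall>s. s |\<in>| ss \<longrightarrow> (\<exists>t. t |\<in>| ts \<and> tree_le le s t))
              \<Longrightarrow> tree_le le (Node ss) (Node ts)"

definition incomparable_part :: "('a \<Rightarrow> 'a \<Rightarrow> bool) \<Rightarrow> 'a set \<Rightarrow> 'a \<Rightarrow> 'a set" where
  "incomparable_part le P x = {y \<in> P. \<not> le x y \<and> \<not> le y x}"

(* width_ge le P \<alpha>  means  w(P) \<ge> \<alpha>, where w(P) = sup_{x\<in>P} (w(L_bot(x)) + 1).
   Since  sup_{x\<in>P} (w_x + 1) \<ge> \<alpha>  iff  \<forall>\<beta><\<alpha>. \<exists>x\<in>P. w_x \<ge> \<beta>,
   this is the defining recursion of the width, read off as a
   (well-founded in \<alpha>) recursion for the predicate "w(P) \<ge> \<alpha>",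
   with ordinals \<alpha> taken from an arbitrary well-ordered type. *)
inductive width_ge :: "('a \<Rightarrow> 'a \<Rightarrow> bool) \<Rightarrow> 'a set \<Rightarrow> 'o::wellorder \<Rightarrow> bool"
  for le :: "'a \<Rightarrow> 'a \<Rightarrow> bool" where
  "(\<forall>\<beta><\<alpha>. \<exists>x\<in>P. width_ge le (incomparable_part le P x) \<beta>) \<Longrightarrow> width_ge le P \<alpha>"

(* Ordinals below \<omega>^2 are represented by nat \<times> nat with lexicographic order:
   (a, b) stands for \<omega>\<cdot>a + b.  Hence \<omega> + 1 = (1, 1). *)
definition omega_plus_one :: "nat \<times> nat" where
  "omega_plus_one = (1, 1)"

end

theory Submission
  imports Defs
begin

lemma W_aux:
  fixes n :: nat
  shows "\<forall>P f. (\<forall>i<n. f i \<in> P) \<and> (\<forall>i<n. \<forall>j<n. i \<noteq> j \<longrightarrow> \<not> le (f i) (f j))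
     \<longrightarrow> width_ge le P ((0::nat), n)"
proof (induction n rule: less_induct)
  case (less n)
  show ?case
  proof (intro allI impI)
    fix P f assume H: "(\<forall>i<n. f i \<in> P) \<and> (\<forall>i<n. \<forall>j<n. i \<noteq> j \<longrightarrow> \<not> le (f i) (f j))"
    show "width_ge le P ((0::nat), n)"
    proof (rule width_ge.intros, intro allI impI)
      fix \<beta> :: "nat \<times> nat" assume "\<beta> < (0, n)"
      then obtain m where b: "\<beta> = (0, m)" and mn: "m < n"
        by (cases \<beta>) (auto simp: less_prod_def)
      define x where "x = f (n - 1)"
      have xP: "x \<in> P" using H mn x_def by auto
      have "width_ge le (incomparable_part le P x) ((0::nat), m)"
        using less.IH[OF mn, rule_format, where P="incomparable_part le P x" and f=f] H mn
        unfolding incomparable_part_def x_def by auto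
      then show "\<exists>x\<in>P. width_ge le (incomparable_part le P x) \<beta>" using xP b by auto
    qed
  qed
qed

lemma W:
  fixes n :: nat
  assumes "\<And>i. i < n \<Longrightarrow> f i \<in> P"
    and "\<And>i j. i < n \<Longrightarrow> j < n \<Longrightarrow> i \<noteq> j \<Longrightarrow> \<not> le (f i) (f j)"
  shows "width_ge le P ((0::nat), n)"
  using W_aux[where n=n and le=le] assms by blast

abbreviation R :: "bool tree \<Rightarrow> bool tree \<Rightarrow> bool" where
  "R \<equiv> tree_le ((\<le>) :: bool \<Rightarrow> bool \<Rightarrow> bool)"

inductive_simps le_LL: "tree_le le (Leaf x) (Leaf y)"
inductive_simps le_NL: "tree_le le (Node ss) (Leaf y)"
inductive_simps le_LN: "tree_le le (Leaf x) (Node ts)"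
inductive_simps le_NN: "tree_le le (Node ss) (Node ts)"

fun Q :: "nat \<Rightarrow> bool tree" where
  "Q 0 = Leaf False"
| "Q (Suc k) = Node {|Q k|}"

definition A :: "nat \<Rightarrow> bool tree" where
  "A k = Node {|Leaf True, Q k|}"

definition C :: "nat \<Rightarrow> nat \<Rightarrow> bool tree" where
  "C M k = Node {|A k, Q (M - k)|}"

definition X :: "bool tree" where
  "X = Node {|Node {|Node {|Leaf True|}|}|}"

lemma tf_Q: "tf (Q k)"
  by (induction k) (auto intro: tf.intros)

lemma tf_C: "C M k \<in> Tf"
  unfolding Tf_def C_def A_def by (auto intro!: tf.intros tf_Q)

lemma tf_X: "X \<in> Tf"
  unfolding Tf_def X_def by (auto intro!: tf.intros)

lemma True_Q: "\<not> R (Leaf True) (Q k)"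
  by (induction k) (auto simp: le_LL le_LN)

lemma Q_Q: "R (Q j) (Q m) \<Longrightarrow> j \<le> m"
proof (induction j arbitrary: m)
  case 0 then show ?case by simp
next
  case (Suc j) then show ?case
    by (cases m) (auto simp: le_NL le_NN)
qed

lemma Q_True: "R (Q j) (Leaf True) \<Longrightarrow> j = 0"
  by (cases j) (auto simp: le_NL)

lemma Q_A: "R (Q (Suc j)) (A m) \<Longrightarrow> j \<le> m"
  unfolding A_def using Q_True Q_Q by (auto simp: le_NN)

lemma A_Q: "\<not> R (A k) (Q j)"
  unfolding A_def using True_Q by (cases j) (auto simp: le_NL le_NN)

lemma A_A: "R (A k) (A m) \<Longrightarrow> k \<le> m"
  using Q_True Q_Q unfolding A_def by (auto simp: le_NN)

lemma C_C:
  assumes "k \<le> n" "m \<le> n" "k \<noteq> m" "2*n + 3 \<le> M"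
  shows "\<not> R (C M k) (C M m)"
proof
  assume h: "R (C M k) (C M m)"
  then have a: "R (A k) (A m) \<or> R (A k) (Q (M - m))"
    and q: "R (Q (M - k)) (A m) \<or> R (Q (M - k)) (Q (M - m))"
    unfolding C_def by (auto simp: le_NN)
  from a A_Q A_A have km: "k \<le> m" by blast
  obtain j where j: "M - k = Suc j" using assms by (cases "M - k") auto
  from q show False
  proof
    assume "R (Q (M - k)) (A m)"
    then have "j \<le> m" using Q_A j by simp
    then show False using assms j by linarith
  next
    assume "R (Q (M - k)) (Q (M - m))"
    then have "M - k \<le> M - m" by (rule Q_Q)
    then show False using assms km by linarith
  qed
qed

lemma X_C: "\<not> R X (C M k)"
proof -
  have p1: "\<not> R (Node {|Leaf True|}) (Q j)" for j
    using True_Q by (cases j) (auto simp: le_NN le_NL)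
  have p2: "\<not> R (Node {|Node {|Leaf True|}|}) (Q j)" for j
    using p1 by (cases j) (auto simp: le_NN le_NL)
  have p3: "\<not> R (Node {|Node {|Leaf True|}|}) (A k)"
    unfolding A_def using p1 by (auto simp: le_NN le_NL)
  show ?thesis unfolding X_def C_def using p2 p3 by (auto simp: le_NN)
qed

lemma C_X:
  assumes "3 \<le> M - k"
  shows "\<not> R (C M k) X"
proof
  assume "R (C M k) X"
  then have "R (Q (M - k)) (Node {|Node {|Leaf True|}|})"
    unfolding C_def X_def by (auto simp: le_NN)
  moreover obtain j where "M - k = Suc (Suc (Suc j))" using assms
    by (metis Suc_le_D numeral_3_eq_3 Suc_le_mono)
  ultimately show False by (auto simp: le_NN le_NL)
qed

lemma L_X:
  fixes n :: nat
  shows "width_ge R (incomparable_part R Tf X) (1::nat, 0::nat)"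
proof (rule width_ge.intros, intro allI impI)
  fix \<beta> :: "nat \<times> nat" assume "\<beta> < (1, 0)"
  then obtain n where b: "\<beta> = (0, n)"
    by (cases \<beta>) (auto simp: less_prod_def)
  define M where "M = 2 * (n+1) + 3"
  define f where "f = C M"
  have inP: "f i \<in> incomparable_part R Tf X" if "i \<le> n + 1" for i
    unfolding incomparable_part_def f_def using tf_C X_C C_X[of M i] that M_def by auto
  have anti: "\<not> R (f i) (f j)" if "i \<le> n+1" "j \<le> n+1" "i \<noteq> j" for i j
    unfolding f_def using C_C[of i "n+1" j M] that M_def by auto
  have "width_ge R (incomparable_part R (incomparable_part R Tf X) (f (n+1))) (0::nat, n)"
    apply (rule W[where f = f])
    using inP anti unfolding incomparable_part_def
     apply auto
    done
  then show "\<exists>x\<in>incomparable_part R Tf X. width_ge R (incomparable_part R (incomparable_part R Tf X) x) \<beta>"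
    using inP[of "n+1"] b by auto
qed

lemma L_X0:
  fixes n :: nat
  shows "width_ge R (incomparable_part R Tf X) (0::nat, n)"
proof -
  define M where "M = 2 * n + 3"
  define f where "f = C M"
  have inP: "f i \<in> incomparable_part R Tf X" if "i \<le> n" for i
    unfolding incomparable_part_def f_def using tf_C X_C C_X[of M i] that M_def by auto
  have anti: "\<not> R (f i) (f j)" if "i \<le> n" "j \<le> n" "i \<noteq> j" for i j
    unfolding f_def using C_C[of i n j M] that M_def by auto
  show ?thesis
    apply (rule W[where f = f])
    using inP anti by auto
qed

theorem lemma3p22:
  shows "width_ge (tree_le ((\<le>) :: bool \<Rightarrow> bool \<Rightarrow> bool)) Tf omega_plus_one"
  unfolding omega_plus_one_def
proof (rule width_ge.intros, intro allI impI)
  fix \<beta> :: "nat \<times> nat" assume "\<beta> < (1, 1)"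
  then have "fst \<beta> = 0 \<or> \<beta> = (1, 0)"
    by (cases \<beta>) (auto simp: less_prod_def)
  then consider n where "\<beta> = (0, n)" | "\<beta> = (1, 0)"
    by (metis prod.collapse)
  then show "\<exists>x\<in>Tf. width_ge R (incomparable_part R Tf x) \<beta>"
    using tf_X L_X L_X0 by cases auto
qed

end
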